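(* Let $w\ge100$ and let $\tilde x:[0,1]\to\mathbb R$ solve $$\tilde x'(s)=(w+1)-w\tanh\bigl(s\,\tilde x(s)\bigr),\qquad \tilde x(0)=x.$$ If $x>-2w+26\ln w$, then $\tilde x(1)\ge0$.
   Context: This ODE is the (time-reparametrized, $T\to\infty$ limit of the) guided probability flow ODE with guidance parameter $w$ toward the component $z=+1$ for the Gaussian mixture $\frac12\mathcal N(1,1)+\frac12\mathcal N(-1,1)$; $\tilde x(1)$ is the output sample for initialization $x$. *)

theory Defs
  imports "HOL-Analysis.Analysis"
begin

end

theory Submission
  imports Defs
begin

lemma lb_deriv:
  fixes xt f :: "real \<Rightarrow> real" and a b m :: real
  assumes ab: "a \<le> b" and sub: "0 \<le> a" "b \<le> 1"
    and d: "\<And>s. s \<in> {0..1} \<Longrightarrow> (xt has_real_derivative f s) (at s within {0..1})"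
    and m: "\<And>s. s \<in> {a..b} \<Longrightarrow> f s \<ge> m"
  shows "xt b - xt a \<ge> m * (b - a)"
proof -
  have "\<exists>x\<in>{a..b}. xt b - xt a = (\<lambda>h. f x * h) (b - a)"
  proof (rule mvt_very_simple[OF ab])
    fix x assume "a \<le> x" "x \<le> b"
    then have "(xt has_real_derivative f x) (at x within {a..b})"
      using d[of x] sub by (auto intro: has_field_derivative_subset)
    then show "(xt has_derivative (\<lambda>h. f x * h)) (at x within {a..b})"
      by (simp add: has_field_derivative_def)
  qed
  then obtain x where x: "x \<in> {a..b}" "xt b - xt a = (b - a) * f x" by auto
  show ?thesis using x m[OF x(1)] ab by (simp add: mult_right_mono mult.commute)
qed

theorem lemma4p1:
  fixes w x :: real and xt :: "real \<Rightarrow> real"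
  assumes hw: "w \<ge> 100"
    and hode: "\<And>s. s \<in> {0..1} \<Longrightarrow>
       (xt has_real_derivative ((w + 1) - w * tanh (s * xt s))) (at s within {0..1})"
    and hinit: "xt 0 = x"
    and hx: "x > - 2 * w + 26 * ln w"
  shows "xt 1 \<ge> 0"
proof (rule ccontr)
  assume neg: "\<not> xt 1 \<ge> 0"
  define f where "f s = (w + 1) - w * tanh (s * xt s)" for s
  have d: "\<And>s. s \<in> {0..1} \<Longrightarrow> (xt has_real_derivative f s) (at s within {0..1})"
    using hode by (simp add: f_def)
  have wpos: "w > 0" using hw by simp
  have f1: "f s \<ge> 1" for s
  proof -
    have "w * tanh (s * xt s) \<le> w * 1" using tanh_real_lt_1[of "s * xt s"] wpos
      by (intro mult_left_mono) auto
    then show ?thesis by (simp add: f_def)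
  qed
  have mono: "xt s \<le> xt 1" if "s \<in> {0..1}" for s
    using lb_deriv[of s 1 xt f 1, OF _ _ _ d f1] that by auto
  have negs: "xt s < 0" if "s \<in> {0..1}" for s using mono[OF that] neg by simp
  have fw: "f s \<ge> w + 1" if "s \<in> {0..1}" for s
  proof -
    have "s * xt s \<le> 0" using negs[OF that] that by (simp add: mult_nonneg_nonpos)
    then have "tanh (s * xt s) \<le> 0" by simp
    then have "w * tanh (s * xt s) \<le> 0" using wpos by (simp add: mult_nonneg_nonpos)
    then show ?thesis by (simp add: f_def)
  qed
  have up: "xt s \<le> - (w + 1) * (1 - s)" if "s \<in> {0..1}" for s
  proof -
    have "xt 1 - xt s \<ge> (w + 1) * (1 - s)"
      using lb_deriv[of s 1 xt f "w+1", OF _ _ _ d fw] that by auto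
    moreover have "- (w + 1) * (1 - s) = - ((w + 1) * (1 - s))" by (simp add: algebra_simps)
    ultimately show ?thesis using neg by linarith
  qed
  define L where "L = ln w"
  have Lpos: "L \<ge> 1"
  proof -
    have "exp 1 \<le> (3::real)" using exp_le by simp
    then have "exp 1 \<le> w" using hw by simp
    then show ?thesis unfolding L_def using wpos by (simp add: ln_ge_iff)
  qed
  have Lw: "L \<le> w / 2"
  proof -
    have "ln (sqrt w) \<le> sqrt w - 1" using wpos by (intro ln_le_minus_one) auto
    moreover have "ln (sqrt w) = L / 2" unfolding L_def using wpos by (simp add: ln_sqrt)
    moreover have "sqrt w \<ge> 10" using hw real_sqrt_le_mono[of 100 w] by simp
    moreover have "sqrt w * sqrt w = w" using wpos by simp
    moreover have "(sqrt w - 2) * (sqrt w - 2) \<ge> 0" by simp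
    ultimately show ?thesis by (simp add: algebra_simps)
  qed
  define \<delta> where "\<delta> = L / w"
  have dpos: "\<delta> > 0" using Lpos wpos by (simp add: \<delta>_def)
  have dhalf: "\<delta> \<le> 1/2" using Lw wpos by (simp add: \<delta>_def field_simps)
  have tval: "tanh (- L / 2) = (1 - w) / (1 + w)"
  proof -
    have "exp (- 2 * (- L / 2)) = w" unfolding L_def using wpos by simp
    then show ?thesis by (simp add: tanh_real_altdef)
  qed
  have fmid: "f s \<ge> 2 * w - 1" if "s \<in> {\<delta>..1 - \<delta>}" for s
  proof -
    have s01: "s \<in> {0..1}" using that dpos by auto
    have "s * (1 - s) \<ge> \<delta> * (1 - \<delta>)"
    proof -
      have "s * (1 - s) - \<delta> * (1 - \<delta>) = (s - \<delta>) * ((1 - \<delta>) - s)" by (simp add: algebra_simps)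
      moreover have "(s - \<delta>) * ((1 - \<delta>) - s) \<ge> 0" using that by auto
      ultimately show ?thesis by linarith
    qed
    moreover have "\<delta> * (1/2 - \<delta>) \<ge> 0" using dhalf dpos by simp
    then have "\<delta> * (1 - \<delta>) \<ge> \<delta> / 2" by (simp add: algebra_simps)
    ultimately have ss: "s * (1 - s) \<ge> \<delta> / 2" by linarith
    have "s * xt s \<le> s * (- (w + 1) * (1 - s))"
      using up[OF s01] s01 by (intro mult_left_mono) auto
    also have "\<dots> = - (w + 1) * (s * (1 - s))" by (simp add: algebra_simps)
    also have "\<dots> \<le> - (w + 1) * (\<delta> / 2)" using ss wpos by (intro mult_left_mono_neg) auto
    also have "\<dots> \<le> - L / 2"
    proof -
      have "(w + 1) * \<delta> = L + L / w" using wpos by (simp add: \<delta>_def field_simps)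
      moreover have "L / w \<ge> 0" using Lpos wpos by simp
      ultimately show ?thesis by (simp add: algebra_simps)
    qed
    finally have "tanh (s * xt s) \<le> (1 - w) / (1 + w)" using tval by (metis tanh_real_le_iff)
    then have "w * tanh (s * xt s) \<le> w * ((1 - w) / (1 + w))" using wpos by (intro mult_left_mono) auto
    moreover have "w + 1 - w * ((1 - w) / (1 + w)) \<ge> 2 * w - 1"
    proof -
      have "w + 1 - w * ((1 - w) / (1 + w)) - (2 * w - 1) = 2 / (w + 1)"
        using wpos by (simp add: field_simps)
      moreover have "2 / (w + 1) > 0" using wpos by simp
      ultimately show ?thesis by linarith
    qed
    ultimately show ?thesis by (simp add: f_def)
  qed
  have A: "xt \<delta> - xt 0 \<ge> 1 * (\<delta> - 0)"
    using lb_deriv[of 0 \<delta> xt f 1, OF _ _ _ d f1] dpos dhalf by auto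
  have B: "xt (1 - \<delta>) - xt \<delta> \<ge> (2 * w - 1) * ((1 - \<delta>) - \<delta>)"
    using lb_deriv[of \<delta> "1 - \<delta>" xt f "2 * w - 1", OF _ _ _ d fmid] dpos dhalf by auto
  have C: "xt 1 - xt (1 - \<delta>) \<ge> 1 * (1 - (1 - \<delta>))"
    using lb_deriv[of "1 - \<delta>" 1 xt f 1, OF _ _ _ d f1] dpos dhalf by auto
  have wd: "w * \<delta> = L" using wpos by (simp add: \<delta>_def)
  have "xt 1 \<ge> x + 2 * w - 1 - 4 * L"
    proof -
    have "(2 * w - 1) * ((1 - \<delta>) - \<delta>) = 2 * w - 1 - 4 * (w * \<delta>) + 2 * \<delta>"
      by (simp add: algebra_simps)
    then have B': "xt (1 - \<delta>) - xt \<delta> \<ge> 2 * w - 1 - 4 * L + 2 * \<delta>" using B wd by simp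
    show ?thesis using A B' C hinit dpos by simp
  qed
  then show False using hx neg Lpos unfolding L_def by linarith
qed

end
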